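(* Let $\Gamma,T,\ast$, $W$ and the rewriting system be as in the context. Let $c$ be a redundant $1$-cell of $\mathcal{UD}^n\Gamma$, written $c=\{c_1,\dots,c_{n-2},v,e\}$ where $v$ is the smallest unblocked vertex of $c$ and $e$ is the unique edge of $c$. Let $c'=\{c_1,\dots,c_{n-2},\tau(e(v)),e\}$. If $$(\tau(e(v)),v)\cap\{c_1,\dots,c_{n-2},\iota(e),\tau(e)\}=\emptyset,$$ then $c\stackrel{*}{\to}c'$ in the string rewriting system of $\mathcal{MP}_{W,T_W}$, where $c$ and $c'$ are regarded as words of length one in the oriented $1$-cells.
   Context: $\Gamma$ is a finite connected graph and $n\ge1$; $d(v)$ is the degree. $\mathcal{UD}^n\Gamma$ is the cell complex whose cells are unordered $n$-element sets $c=\{c_1,\dots,c_n\}$ where each $c_i$ is a vertex or an edge of $\Gamma$ and the closed sets $c_i$ are pairwise disjoint; dimension = number of edges; faces are obtained by replacing edges by endpoints. Fix a maximal tree $T$ of $\Gamma$ and a vertex $\ast$ of degree $1$ in $T$. For vertices $v_1,v_2$, $v_1\wedge v_2$ is the endpoint other than $\ast$ of $[\ast,v_1]\cap[\ast,v_2]$ (geodesics in $T$), or $\ast$ if this is $\{\ast\}$. Directions (edges) at each vertex $v$ are labelled $0,\dots,d(v)-1$, label $0$ for the edge of $T$ towards $\ast$ (the direction from $\ast$ in $T$ gets label $1$); $g(v_1,v_2)$ is the label of the direction from $v_1$ on the $T$-geodesic to $v_2$, $g(v,v)=0$. Order: $v_1\le v_2$ iff, with $v_3=v_1\wedge v_2$,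 $v_3=v_1$ or ($v_3\ne v_1$ and $g(v_3,v_1)<g(v_3,v_2)$). For vertices $u<u'$, $(u,u')$ denotes the set of vertices $u''$ with $u<u''<u'$. For an edge $e$, $\iota(e)\ge\tau(e)$ are its endpoints; for $v\ne\ast$, $e(v)$ is the edge of $T$ at $v$ in direction $0$. A vertex $v\neq\ast$ of a cell $c$ is unblocked if $e(v)$ is disjoint from every element of $c$ other than $v$ (then the elementary reduction from $v$ replaces $v$ by $e(v)$); otherwise, and always for $v=\ast$, blocked. The principal reduction of $c$ is the elementary reduction from its smallest unblocked vertex. $W(c)$ is the principal reduction of $c$ when it exists and $c$ is not itself in the image of $W$ (on cells of one lower dimension); otherwise undefined. Cells in the domain of $W$ are redundant, in the image collapsible, otherwise critical. $W$ is a discrete gradient vector field with a unique critical $0$-cell, and $T_W$ denotes the maximal tree of $\mathcal{UD}^n\Gamma$ formed by the collapsible $1$-cells. Orientation: the $1$-cell $\{c_1,\dots,c_{n-1},e\}$ is oriented from $\{c_1,\dots,c_{n-1},\iota(e)\}$ to $\{c_1,\dots,c_{n-1},\tau(e)\}$. For an oriented $1$-cell $f$, $\overline f$ is the reverse, and for a word $w=f_1\cdots f_m$, $\overline w=\overline{f_m}\cdots\overline{f_1}$. The monoid presentation $\mathcal{MP}_{W,T_W}$ has alphabet all oriented $1$-cells and relations: $(f,1),(\overline f,1)$ for $f$ in $T_W$; $(f\overline f,1),(\overline ff,1)$ for all $f$; and for each collapsible $2$-cell $C=W(f)$ with a chosen boundary word $fw$ (read along the attaching map), $(f,\overline w)$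 and $(\overline f,w)$. Its string rewriting system has moves $ur_1v\to ur_2v$ for relations $(r_1,r_2)$ and words $u,v$; $\stackrel{*}{\to}$ is the reflexive transitive closure of $\to$. *)

theory Defs
  imports Main
begin

record ('v,'e) gdata =
  verts :: "'v set"
  edges :: "'e set"
  endp  :: "'e \<Rightarrow> 'v set"
  tree  :: "'e set"
  base  :: "'v"
  lab   :: "'v \<Rightarrow> 'e \<Rightarrow> nat"

definition inc :: "('v,'e) gdata \<Rightarrow> 'v \<Rightarrow> 'e set" where
  "inc G v = {e \<in> edges G. v \<in> endp G e}"

definition deg :: "('v,'e) gdata \<Rightarrow> 'v \<Rightarrow> nat" where
  "deg G v = card (inc G v)"

definition tpath_ok :: "('v,'e) gdata \<Rightarrow> 'v list \<Rightarrow> bool" where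
  "tpath_ok G xs \<longleftrightarrow> xs \<noteq> [] \<and> distinct xs \<and> set xs \<subseteq> verts G \<and>
     (\<forall>i. Suc i < length xs \<longrightarrow> (\<exists>e\<in>tree G. endp G e = {xs ! i, xs ! Suc i}))"

definition spanning_tree :: "('v,'e) gdata \<Rightarrow> bool" where
  "spanning_tree G \<longleftrightarrow> tree G \<subseteq> edges G \<and>
     (\<forall>e1\<in>tree G. \<forall>e2\<in>tree G. endp G e1 = endp G e2 \<longrightarrow> e1 = e2) \<and>
     (\<forall>v\<in>verts G. \<forall>w\<in>verts G. \<exists>!xs. tpath_ok G xs \<and> hd xs = v \<and> last xs = w)"

definition tp :: "('v,'e) gdata \<Rightarrow> 'v \<Rightarrow> 'v \<Rightarrow> 'v list" where
  "tp G v w = (THE xs. tpath_ok G xs \<and> hd xs = v \<and> last xs = w)"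

definition geod :: "('v,'e) gdata \<Rightarrow> 'v \<Rightarrow> 'v \<Rightarrow> 'v set" where
  "geod G v w = set (tp G v w)"

definition tedge :: "('v,'e) gdata \<Rightarrow> 'v \<Rightarrow> 'v \<Rightarrow> 'e" where
  "tedge G a b = (THE e. e \<in> tree G \<and> endp G e = {a, b})"

text \<open>e(v): the tree edge at v in direction 0 (towards the base vertex).\<close>
definition eT :: "('v,'e) gdata \<Rightarrow> 'v \<Rightarrow> 'e" where
  "eT G v = tedge G v (tp G v (base G) ! 1)"

definition valid :: "('v,'e) gdata \<Rightarrow> bool" where
  "valid G \<longleftrightarrow> finite (verts G) \<and> finite (edges G) \<and>
     (\<forall>e\<in>edges G. endp G e \<subseteq> verts G \<and> card (endp G e) = 2) \<and>
     spanning_tree G \<and>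
     base G \<in> verts G \<and> card {e \<in> tree G. base G \<in> endp G e} = 1 \<and>
     (\<forall>v\<in>verts G. bij_betw (lab G v) (inc G v) {..<deg G v}) \<and>
     (\<forall>v\<in>verts G. v \<noteq> base G \<longrightarrow> lab G v (eT G v) = 0) \<and>
     (\<forall>e\<in>tree G. base G \<in> endp G e \<longrightarrow> deg G (base G) \<ge> 2 \<longrightarrow> lab G (base G) e = 1)"

definition meet :: "('v,'e) gdata \<Rightarrow> 'v \<Rightarrow> 'v \<Rightarrow> 'v" where
  "meet G v1 v2 = (THE u. u \<in> geod G (base G) v1 \<inter> geod G (base G) v2 \<and>
       geod G (base G) v1 \<inter> geod G (base G) v2 = geod G (base G) u)"

definition gdir :: "('v,'e) gdata \<Rightarrow> 'v \<Rightarrow> 'v \<Rightarrow> nat" where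
  "gdir G v1 v2 = (if v1 = v2 then 0 else lab G v1 (tedge G v1 (tp G v1 v2 ! 1)))"

definition vle :: "('v,'e) gdata \<Rightarrow> 'v \<Rightarrow> 'v \<Rightarrow> bool" where
  "vle G v1 v2 = (let v3 = meet G v1 v2 in
      v3 = v1 \<or> (v3 \<noteq> v1 \<and> gdir G v3 v1 < gdir G v3 v2))"

definition vless :: "('v,'e) gdata \<Rightarrow> 'v \<Rightarrow> 'v \<Rightarrow> bool" where
  "vless G v1 v2 \<longleftrightarrow> vle G v1 v2 \<and> v1 \<noteq> v2"

definition vint :: "('v,'e) gdata \<Rightarrow> 'v \<Rightarrow> 'v \<Rightarrow> 'v set" where
  "vint G u u' = {w \<in> verts G. vless G u w \<and> vless G w u'}"

definition iota :: "('v,'e) gdata \<Rightarrow> 'e \<Rightarrow> 'v" where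
  "iota G e = (THE x. x \<in> endp G e \<and> (\<forall>y\<in>endp G e. vle G y x))"

definition tau :: "('v,'e) gdata \<Rightarrow> 'e \<Rightarrow> 'v" where
  "tau G e = (THE x. x \<in> endp G e \<and> (\<forall>y\<in>endp G e. vle G x y))"

datatype ('v,'e) elt = Vtx 'v | Edg 'e

type_synonym ('v,'e) cell = "('v,'e) elt set"

fun clos :: "('v,'e) gdata \<Rightarrow> ('v,'e) elt \<Rightarrow> 'v set" where
  "clos G (Vtx v) = {v}"
| "clos G (Edg e) = endp G e"

fun in_graph :: "('v,'e) gdata \<Rightarrow> ('v,'e) elt \<Rightarrow> bool" where
  "in_graph G (Vtx v) = (v \<in> verts G)"
| "in_graph G (Edg e) = (e \<in> edges G)"

definition cells :: "('v,'e) gdata \<Rightarrow> nat \<Rightarrow> ('v,'e) cell set" where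
  "cells G n = {c. finite c \<and> card c = n \<and> (\<forall>x\<in>c. in_graph G x) \<and>
      (\<forall>x\<in>c. \<forall>y\<in>c. x \<noteq> y \<longrightarrow> clos G x \<inter> clos G y = {})}"

definition dim :: "('v,'e) cell \<Rightarrow> nat" where
  "dim c = card {e. Edg e \<in> c}"

definition unblocked :: "('v,'e) gdata \<Rightarrow> ('v,'e) cell \<Rightarrow> 'v \<Rightarrow> bool" where
  "unblocked G c v \<longleftrightarrow> Vtx v \<in> c \<and> v \<noteq> base G \<and>
     (\<forall>x\<in>c. x \<noteq> Vtx v \<longrightarrow> endp G (eT G v) \<inter> clos G x = {})"

definition has_pr :: "('v,'e) gdata \<Rightarrow> ('v,'e) cell \<Rightarrow> bool" where
  "has_pr G c \<longleftrightarrow> (\<exists>v. unblocked G c v)"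

definition min_unblocked :: "('v,'e) gdata \<Rightarrow> ('v,'e) cell \<Rightarrow> 'v" where
  "min_unblocked G c = (THE v. unblocked G c v \<and> (\<forall>u. unblocked G c u \<longrightarrow> vle G v u))"

definition elred :: "('v,'e) gdata \<Rightarrow> ('v,'e) cell \<Rightarrow> 'v \<Rightarrow> ('v,'e) cell" where
  "elred G c v = insert (Edg (eT G v)) (c - {Vtx v})"

definition pr :: "('v,'e) gdata \<Rightarrow> ('v,'e) cell \<Rightarrow> ('v,'e) cell" where
  "pr G c = elred G c (min_unblocked G c)"

fun redset :: "('v,'e) gdata \<Rightarrow> nat \<Rightarrow> nat \<Rightarrow> ('v,'e) cell set" where
  "redset G n 0 = {c \<in> cells G n. dim c = 0 \<and> has_pr G c}"
| "redset G n (Suc k) = {c \<in> cells G n. dim c = Suc k \<and> has_pr G c \<and> c \<notin> pr G ` redset G n k}"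

definition redundant :: "('v,'e) gdata \<Rightarrow> nat \<Rightarrow> ('v,'e) cell \<Rightarrow> bool" where
  "redundant G n c \<longleftrightarrow> c \<in> redset G n (dim c)"

definition collapsible :: "('v,'e) gdata \<Rightarrow> nat \<Rightarrow> ('v,'e) cell \<Rightarrow> bool" where
  "collapsible G n c \<longleftrightarrow> c \<in> cells G n \<and> 0 < dim c \<and> c \<in> pr G ` redset G n (dim c - 1)"

definition W :: "('v,'e) gdata \<Rightarrow> ('v,'e) cell \<Rightarrow> ('v,'e) cell" where
  "W G c = pr G c"

text \<open>Oriented 1-cells: (f, True) is f with its standard orientation
  (from iota to tau), (f, False) is the reverse.\<close>
type_synonym ('v,'e) ocell = "('v,'e) cell \<times> bool"

definition orev :: "('v,'e) ocell \<Rightarrow> ('v,'e) ocell" where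
  "orev f = (fst f, \<not> snd f)"

definition wrev :: "('v,'e) ocell list \<Rightarrow> ('v,'e) ocell list" where
  "wrev w = rev (map orev w)"

definition edge_of :: "('v,'e) cell \<Rightarrow> 'e" where
  "edge_of f = (THE e. Edg e \<in> f)"

text \<open>For a redundant 1-cell f with C = W f, the boundary word of C read along
  the attaching map starting with f (positively): f w.  Here f = R + {a, e2},
  C = R + {e1, e2} with e1 = e(a), and a' is the other endpoint of e1.\<close>
definition bword :: "('v,'e) gdata \<Rightarrow> ('v,'e) cell \<Rightarrow> ('v,'e) ocell list" where
  "bword G f = (let a = min_unblocked G f; e1 = eT G a; e2 = edge_of f;
       a' = (THE x. x \<in> endp G e1 \<and> x \<noteq> a);
       R = f - {Vtx a, Edg e2} in
     [ (R \<union> {Edg e1, Vtx (tau G e2)}, a = iota G e1),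
       (R \<union> {Vtx a', Edg e2}, False),
       (R \<union> {Edg e1, Vtx (iota G e2)}, a' = iota G e1) ])"

definition one_cells :: "('v,'e) gdata \<Rightarrow> nat \<Rightarrow> ('v,'e) cell set" where
  "one_cells G n = {f \<in> cells G n. dim f = 1}"

definition TW :: "('v,'e) gdata \<Rightarrow> nat \<Rightarrow> ('v,'e) cell set" where
  "TW G n = {f \<in> one_cells G n. collapsible G n f}"

definition rels :: "('v,'e) gdata \<Rightarrow> nat \<Rightarrow> (('v,'e) ocell list \<times> ('v,'e) ocell list) set" where
  "rels G n =
     {([(f, b)], []) | f b. f \<in> TW G n}
   \<union> {([(f, b), (f, \<not> b)], []) | f b. f \<in> one_cells G n}
   \<union> {([(f, True)], wrev (bword G f)) | f. f \<in> one_cells G n \<and> redundant G n f}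
   \<union> {([(f, False)], bword G f) | f. f \<in> one_cells G n \<and> redundant G n f}"

definition rw_step :: "('v,'e) gdata \<Rightarrow> nat \<Rightarrow> ('v,'e) ocell list \<Rightarrow> ('v,'e) ocell list \<Rightarrow> bool" where
  "rw_step G n x y \<longleftrightarrow> (\<exists>u v l r. (l, r) \<in> rels G n \<and> x = u @ l @ v \<and> y = u @ r @ v)"

end

theory Submission
  imports Defs "HOL-Library.List_Lexorder"
begin


lemma tpath_rev: "tpath_ok G xs \<Longrightarrow> tpath_ok G (rev xs)"
  unfolding tpath_ok_def
proof (intro conjI allI impI)
  fix i assume h: "xs \<noteq> [] \<and> distinct xs \<and> set xs \<subseteq> verts G \<and>
     (\<forall>i. Suc i < length xs \<longrightarrow> (\<exists>e\<in>tree G. endp G e = {xs ! i, xs ! Suc i}))"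
    and i: "Suc i < length (rev xs)"
  let ?j = "length xs - Suc (Suc i)"
  have "Suc ?j < length xs" using i by simp
  then obtain e where "e \<in> tree G" "endp G e = {xs ! ?j, xs ! Suc ?j}" using h by blast
  moreover have "rev xs ! i = xs ! Suc ?j" "rev xs ! Suc i = xs ! ?j" using i
    by (auto simp: rev_nth Suc_diff_Suc)
  ultimately show "\<exists>e\<in>tree G. endp G e = {rev xs ! i, rev xs ! Suc i}" by (auto simp: insert_commute)
qed auto

lemma tpath_drop: "tpath_ok G xs \<Longrightarrow> i < length xs \<Longrightarrow> tpath_ok G (drop i xs)"
  unfolding tpath_ok_def
  by (auto dest: in_set_dropD)

lemma tpath_take: "tpath_ok G xs \<Longrightarrow> 0 < i \<Longrightarrow> tpath_ok G (take i xs)"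
  unfolding tpath_ok_def
  apply (auto dest: in_set_takeD)
  done

context
  fixes G :: "('v,'e) gdata"
  assumes valid: "valid G"
begin

lemma st: "spanning_tree G" using valid by (simp add: valid_def)

lemma tp_props:
  assumes "v \<in> verts G" "w \<in> verts G"
  shows "tpath_ok G (tp G v w) \<and> hd (tp G v w) = v \<and> last (tp G v w) = w"
proof -
  have "\<exists>!xs. tpath_ok G xs \<and> hd xs = v \<and> last xs = w" using st assms
    unfolding spanning_tree_def by blast
  then show ?thesis unfolding tp_def by (rule theI')
qed

lemma tp_eq:
  assumes "tpath_ok G xs" "hd xs = v" "last xs = w"
  shows "tp G v w = xs"
proof -
  have ne: "xs \<noteq> []" "set xs \<subseteq> verts G" using assms(1) by (auto simp: tpath_ok_def)
  hence "v \<in> verts G" "w \<in> verts G" using assms by auto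
  hence "\<exists>!xs. tpath_ok G xs \<and> hd xs = v \<and> last xs = w" using st
    unfolding spanning_tree_def by blast
  then show ?thesis unfolding tp_def using assms by (intro the1_equality) auto
qed

lemma valid_fin: "finite (verts G)" "finite (edges G)" using valid by (auto simp: valid_def)
lemma base_verts: "base G \<in> verts G" using valid by (simp add: valid_def)
lemma tree_edges: "tree G \<subseteq> edges G" using st by (simp add: spanning_tree_def)
lemma tree_np: "e1 \<in> tree G \<Longrightarrow> e2 \<in> tree G \<Longrightarrow> endp G e1 = endp G e2 \<Longrightarrow> e1 = e2"
  using st by (simp add: spanning_tree_def)
lemma endp_edge: "e \<in> edges G \<Longrightarrow> endp G e \<subseteq> verts G \<and> card (endp G e) = 2"
  using valid by (simp add: valid_def)
lemma lab_inj: "v \<in> verts G \<Longrightarrow> inj_on (lab G v) (inc G v)"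
  using valid by (auto simp: valid_def bij_betw_def)

definition "up v = tp G v (base G)"
definition "par v = up v ! 1"
definition "depth v = length (up v)"
definition "cl b = lab G (par b) (eT G b)"
definition "key v = map cl (rev (butlast (up v)))"

lemma up_props: "v \<in> verts G \<Longrightarrow> tpath_ok G (up v) \<and> hd (up v) = v \<and> last (up v) = base G"
  unfolding up_def using tp_props base_verts by blast

lemma up_eq: "tpath_ok G xs \<Longrightarrow> hd xs = v \<Longrightarrow> last xs = base G \<Longrightarrow> up v = xs"
  unfolding up_def by (rule tp_eq)

lemma up_ne: "v \<in> verts G \<Longrightarrow> up v \<noteq> [] \<and> distinct (up v) \<and> set (up v) \<subseteq> verts G"
  using up_props unfolding tpath_ok_def by blast

lemma up_base: "up (base G) = [base G]"
proof -
  have "tpath_ok G [base G]" using base_verts by (simp add: tpath_ok_def)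
  thus ?thesis unfolding up_def by (intro tp_eq) auto
qed

lemma up_len: assumes "v \<in> verts G" "v \<noteq> base G" shows "2 \<le> length (up v)"
proof -
  have "up v \<noteq> []" "hd (up v) = v" "last (up v) = base G" using up_props up_ne assms by auto
  thus ?thesis using assms(2)
    by (cases "up v") (auto split: if_splits simp: Suc_le_eq)
qed

lemma up_cons: assumes "v \<in> verts G" "v \<noteq> base G"
  shows "up v = v # up (par v)"
proof -
  have l: "2 \<le> length (up v)" by (rule up_len[OF assms])
  have p: "tpath_ok G (up v)" "hd (up v) = v" "last (up v) = base G" using up_props assms by auto
  have "tpath_ok G (drop 1 (up v))" using tpath_drop[OF p(1)] l by simp
  moreover have "hd (drop 1 (up v)) = par v" using l by (simp add: par_def hd_drop_conv_nth)
  moreover have "last (drop 1 (up v)) = base G" using l p by simp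
  ultimately have "up (par v) = drop 1 (up v)" unfolding up_def by (intro tp_eq) auto
  thus ?thesis using p l by (cases "up v") auto
qed

lemma par_verts: assumes "v \<in> verts G" "v \<noteq> base G" shows "par v \<in> verts G"
proof -
  have "par v \<in> set (up v)" using up_len[OF assms] unfolding par_def by (intro nth_mem) simp
  thus ?thesis using up_ne[OF assms(1)] by blast
qed

lemma par_ne: assumes "v \<in> verts G" "v \<noteq> base G" shows "par v \<noteq> v"
proof -
  have "distinct (v # up (par v))" using up_ne[OF assms(1)] by (simp only: up_cons[OF assms, symmetric])
  moreover have "par v \<in> set (up (par v))" using up_ne[OF par_verts[OF assms]] up_props[OF par_verts[OF assms]]
    by (metis list.set_sel(1))
  ultimately show ?thesis by auto
qed

lemma depth_par: "v \<in> verts G \<Longrightarrow> v \<noteq> base G \<Longrightarrow> depth (par v) < depth v"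
  unfolding depth_def by (subst (2) up_cons) auto

lemma tedge_eq: "e \<in> tree G \<Longrightarrow> endp G e = {a, b} \<Longrightarrow> tedge G a b = e"
  unfolding tedge_def using tree_np by (intro the_equality) auto

lemma eT_props: assumes "v \<in> verts G" "v \<noteq> base G"
  shows "eT G v \<in> tree G \<and> endp G (eT G v) = {v, par v}"
proof -
  have l: "2 \<le> length (up v)" by (rule up_len[OF assms])
  have p: "tpath_ok G (up v)" "hd (up v) = v" using up_props assms by auto
  obtain e where e: "e \<in> tree G" "endp G e = {up v ! 0, up v ! Suc 0}"
    using p(1) l unfolding tpath_ok_def by force
  have "up v ! 0 = v" using p l by (cases "up v") auto
  hence "endp G e = {v, par v}" using e by (simp add: par_def)
  moreover have "eT G v = tedge G v (par v)" by (simp add: eT_def par_def up_def)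
  ultimately show ?thesis using tedge_eq e by simp
qed

lemma eT_edges: "v \<in> verts G \<Longrightarrow> v \<noteq> base G \<Longrightarrow> eT G v \<in> edges G"
  using eT_props tree_edges by blast

lemma key_base: "key (base G) = []"
  by (simp add: key_def up_base)

lemma key_cons: assumes "v \<in> verts G" "v \<noteq> base G"
  shows "key v = key (par v) @ [cl v]"
proof -
  have "up (par v) \<noteq> []" using up_ne par_verts assms by blast
  thus ?thesis unfolding key_def using up_cons[OF assms] by simp
qed

lemma key_nonbase: "v \<in> verts G \<Longrightarrow> v \<noteq> base G \<Longrightarrow> key v \<noteq> []"
  using key_cons by simp

lemma key_inj: "v \<in> verts G \<Longrightarrow> w \<in> verts G \<Longrightarrow> key v = key w \<Longrightarrow> v = w"
proof (induction "depth v" arbitrary: v w rule: less_induct)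
  case less
  show ?case
  proof (cases "v = base G")
    case True
    have "key w = []" using less True key_base by simp
    then show ?thesis using less True key_nonbase by blast
  next
    case False
    have "key v \<noteq> []" using key_nonbase less False by blast
    hence wb: "w \<noteq> base G" using less key_base by auto
    have k: "key (par v) @ [cl v] = key (par w) @ [cl w]"
      using key_cons[OF less(2) False] key_cons[OF less(3) wb] less(4) by simp
    have pp: "par v = par w"
      using less(1)[OF depth_par[OF less(2) False] par_verts[OF less(2) False] par_verts[OF less(3) wb]] k
      by simp
    have "cl v = cl w" using k by simp
    hence la: "lab G (par v) (eT G v) = lab G (par v) (eT G w)" using pp by (simp add: cl_def)
    have "eT G v \<in> inc G (par v)" "eT G w \<in> inc G (par v)"
      using eT_props[OF less(2) False] eT_props[OF less(3) wb] eT_edges less False wb pp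
      by (auto simp: inc_def)
    hence "eT G v = eT G w" using la lab_inj par_verts less False by (meson inj_on_def)
    hence "{v, par v} = {w, par v}" using eT_props[OF less(2) False] eT_props[OF less(3) wb] pp by simp
    thus ?thesis using par_ne[OF less(2) False] by (auto simp: doubleton_eq_iff)
  qed
qed

end


lemma prefix_snoc: "(\<exists>r. xs @ [x] = ys @ r) \<longleftrightarrow> ys = xs @ [x] \<or> (\<exists>r. xs = ys @ r)"
proof
  assume "\<exists>r. xs @ [x] = ys @ r"
  then obtain r where r: "xs @ [x] = ys @ r" by blast
  show "ys = xs @ [x] \<or> (\<exists>r. xs = ys @ r)"
  proof (cases r rule: rev_exhaust)
    case Nil then show ?thesis using r by simp
  next
    case (snoc r' y) then show ?thesis using r by auto
  qed
qed auto

lemma lex_prefix_le: "(xs::nat list) \<le> xs @ r"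
proof (induction xs)
  case Nil show ?case by (cases r) (auto simp: list_le_def)
next
  case Cons thus ?case by (auto simp: list_le_def)
qed

lemma lex_prefix_less: "r \<noteq> [] \<Longrightarrow> (xs::nat list) < xs @ r"
  by (induction xs) (auto simp: neq_Nil_conv)

lemma lex_diff: "(x::nat) \<noteq> y \<Longrightarrow> (K @ x # r1 \<le> K @ y # r2) \<longleftrightarrow> x < y"
  by (induction K) (auto simp: le_less)

lemma lex_between: "(K::nat list) < Z \<Longrightarrow> Z < K @ [k] \<Longrightarrow> \<exists>j r. Z = K @ j # r \<and> j < k"
proof (induction K arbitrary: Z)
  case Nil
  then obtain z r where "Z = z # r" by (cases Z) auto
  then show ?case using Nil by auto
next
  case (Cons a K)
  then obtain z r where Z: "Z = z # r" by (cases Z) auto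
  then have "z = a" "K < r" "r < K @ [k]" using Cons.prems by auto
  then show ?case using Cons.IH Z by auto
qed

lemma lex_between_conv: "(j::nat) < k \<Longrightarrow> K < K @ j # r \<and> K @ j # r < K @ [k]"
  by (induction K) auto

context
  fixes G :: "('v,'e) gdata"
  assumes valid: "valid G"
begin

lemma v_in_up: "v \<in> verts G \<Longrightarrow> v \<in> set (up G v)"
  using up_props[OF valid] up_ne[OF valid] by (metis list.set_sel(1))

lemma base_in_up: "v \<in> verts G \<Longrightarrow> base G \<in> set (up G v)"
  using up_props[OF valid] up_ne[OF valid] by (metis last_in_set)

lemma up_verts: "v \<in> verts G \<Longrightarrow> a \<in> set (up G v) \<Longrightarrow> a \<in> verts G"
  using up_ne[OF valid] by blast

lemma anc_key: "v \<in> verts G \<Longrightarrow> a \<in> verts G \<Longrightarrow> a \<in> set (up G v) \<longleftrightarrow> (\<exists>r. key G v = key G a @ r)"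
proof (induction "depth G v" arbitrary: v rule: less_induct)
  case less
  show ?case
  proof (cases "v = base G")
    case True
    have "(\<exists>r. key G v = key G a @ r) \<longleftrightarrow> key G a = []" using True key_base[OF valid] by simp
    also have "\<dots> \<longleftrightarrow> a = base G" using key_base[OF valid] key_nonbase[OF valid] less by blast
    finally show ?thesis using True up_base[OF valid] by auto
  next
    case False
    have pv: "par G v \<in> verts G" using par_verts[OF valid] less False by blast
    have "a \<in> set (up G v) \<longleftrightarrow> a = v \<or> a \<in> set (up G (par G v))"
      using up_cons[OF valid less(2) False] by simp
    also have "\<dots> \<longleftrightarrow> key G a = key G v \<or> (\<exists>r. key G (par G v) = key G a @ r)"
      using less(1)[OF depth_par[OF valid less(2) False] pv] key_inj[OF valid] less by blast
    also have "\<dots> \<longleftrightarrow> (\<exists>r. key G v = key G a @ r)"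
      using prefix_snoc[of "key G (par G v)" "cl G v" "key G a"] key_cons[OF valid less(2) False]
      by auto
    finally show ?thesis .
  qed
qed

lemma anc_exists: "v \<in> verts G \<Longrightarrow> key G v = p @ r \<Longrightarrow> \<exists>a\<in>set (up G v). key G a = p"
proof (induction "depth G v" arbitrary: v r rule: less_induct)
  case less
  show ?case
  proof (cases r rule: rev_exhaust)
    case Nil
    then show ?thesis using less v_in_up by auto
  next
    case (snoc r' y)
    have F: "v \<noteq> base G" using less snoc key_base[OF valid] by auto
    have "key G (par G v) = p @ r'" using key_cons[OF valid less(2) F] less(3) snoc by simp
    then obtain a where "a \<in> set (up G (par G v))" "key G a = p"
      using less(1)[OF depth_par[OF valid less(2) F] par_verts[OF valid less(2) F]] by blast
    then show ?thesis using up_cons[OF valid less(2) F] by auto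
  qed
qed

lemma tp_base: "v \<in> verts G \<Longrightarrow> tp G (base G) v = rev (up G v)"
  using up_props[OF valid] up_ne[OF valid]
  by (intro tp_eq[OF valid]) (auto intro: tpath_rev simp: hd_rev last_rev)

lemma geod_base: "v \<in> verts G \<Longrightarrow> geod G (base G) v = set (up G v)"
  by (simp add: geod_def tp_base)

lemma gdir_anc: assumes v: "v \<in> verts G" and a: "a \<in> set (up G v)" and av: "a \<noteq> v"
  shows "gdir G a v = key G v ! length (key G a)"
proof -
  define L where "L = up G v"
  have Lp: "tpath_ok G L" "hd L = v" "last L = base G" "L \<noteq> []" "distinct L"
    using up_props[OF valid v] up_ne[OF valid v] by (auto simp: L_def)
  obtain j where j: "j < length L" "L ! j = a" using a by (auto simp: L_def in_set_conv_nth)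
  have L0: "L ! 0 = v" using Lp by (cases L) auto
  have j0: "j \<noteq> 0"
  proof
    assume "j = 0" thus False using j L0 av by simp
  qed
  define P where "P = rev (take (Suc j) L)"
  have "tpath_ok G P" unfolding P_def by (intro tpath_rev tpath_take Lp) simp
  moreover have "hd P = a" using j j0 by (simp add: P_def hd_rev take_Suc_conv_app_nth)
  moreover have "last P = v" using j Lp L0 by (simp add: P_def last_rev hd_take hd_conv_nth)
  ultimately have tpav: "tp G a v = P" by (intro tp_eq[OF valid])
  define c where "c = L ! (j - 1)"
  have P1: "P ! 1 = c" using j j0 by (simp add: P_def c_def rev_nth)
  have "tpath_ok G (drop (j - 1) L)" using j by (intro tpath_drop Lp) simp
  moreover have "hd (drop (j - 1) L) = c" using j by (simp add: c_def hd_drop_conv_nth)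
  moreover have "last (drop (j - 1) L) = base G" using j Lp by simp
  ultimately have upc: "up G c = drop (j - 1) L" by (rule up_eq[OF valid])
  have cv: "c \<in> verts G" using Lp j unfolding c_def tpath_ok_def by (meson less_imp_diff_less nth_mem subsetD)
  have "length (up G c) \<ge> 2" using upc j j0 by simp
  hence cb: "c \<noteq> base G" using up_base[OF valid] by auto
  have pc: "par G c = a" using upc j j0 by (simp add: par_def[OF valid])
  have "tedge G a c = eT G c" using eT_props[OF valid cv cb] pc
    by (intro tedge_eq[OF valid]) (auto simp: insert_commute)
  hence g: "gdir G a v = cl G c" using av tpav P1 pc by (simp add: gdir_def cl_def[OF valid])
  have "c \<in> set L" using j unfolding c_def by simp
  then obtain r where "key G v = key G c @ r" using anc_key[OF v cv] by (auto simp: L_def)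
  moreover have "key G c = key G a @ [cl G c]" using key_cons[OF valid cv cb] pc by simp
  ultimately show ?thesis using g by simp
qed

lemma prefix_max: assumes "xs = a @ r" "xs = u @ s" "length a \<le> length u" shows "\<exists>t. u = a @ t"
proof -
  obtain us where "(a = u @ us \<and> us @ r = s) \<or> (a @ us = u \<and> r = us @ s)"
    using assms(1,2) append_eq_append_conv2[of a r u s] by auto
  thus ?thesis using assms(3) by auto
qed

lemma meet_props: assumes v1: "v1 \<in> verts G" and v2: "v2 \<in> verts G"
  shows "meet G v1 v2 \<in> set (up G v1) \<inter> set (up G v2) \<and>
         set (up G v1) \<inter> set (up G v2) = set (up G (meet G v1 v2))"
proof -
  define I where "I = set (up G v1) \<inter> set (up G v2)"
  have fin: "finite I" unfolding I_def by simp
  have ne: "I \<noteq> {}" using base_in_up v1 v2 unfolding I_def by blast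
  have Iv: "I \<subseteq> verts G" unfolding I_def using up_verts v1 by blast
  define M where "M = Max ((\<lambda>a. length (key G a)) ` I)"
  have "M \<in> (\<lambda>a. length (key G a)) ` I" unfolding M_def using fin ne by (intro Max_in) auto
  then obtain u where u: "u \<in> I" "length (key G u) = M" by auto
  have umax: "\<forall>a\<in>I. length (key G a) \<le> length (key G u)" using fin u unfolding M_def by auto
  have uv: "u \<in> verts G" using u Iv by blast
  obtain s1 s2 where s: "key G v1 = key G u @ s1" "key G v2 = key G u @ s2"
    using u anc_key v1 v2 uv unfolding I_def by blast
  have Ieq: "I = set (up G u)"
  proof
    show "I \<subseteq> set (up G u)"
    proof
      fix a assume a: "a \<in> I"
      hence av: "a \<in> verts G" using Iv by blast
      obtain r where "key G v1 = key G a @ r" using a anc_key v1 av unfolding I_def by blast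
      moreover have "length (key G a) \<le> length (key G u)" using umax a by blast
      ultimately obtain t where "key G u = key G a @ t" using prefix_max s(1) by blast
      thus "a \<in> set (up G u)" using anc_key uv av by blast
    qed
  next
    show "set (up G u) \<subseteq> I"
    proof
      fix a assume a: "a \<in> set (up G u)"
      hence av: "a \<in> verts G" using up_verts uv by blast
      obtain t where t: "key G u = key G a @ t" using a anc_key uv av by blast
      have "key G v1 = key G a @ (t @ s1)" "key G v2 = key G a @ (t @ s2)" using s t by simp_all
      thus "a \<in> I" unfolding I_def using anc_key v1 v2 av by blast
    qed
  qed
  have geq: "\<And>w. w \<in> verts G \<Longrightarrow> geod G (base G) w = set (up G w)" by (rule geod_base)
  have "meet G v1 v2 = u"
    unfolding meet_def geq[OF v1] geq[OF v2]
  proof (rule the_equality)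
    show "u \<in> set (up G v1) \<inter> set (up G v2) \<and>
      set (up G v1) \<inter> set (up G v2) = geod G (base G) u"
      using u Ieq geq[OF uv] unfolding I_def by simp
  next
    fix x assume x: "x \<in> set (up G v1) \<inter> set (up G v2) \<and>
      set (up G v1) \<inter> set (up G v2) = geod G (base G) x"
    hence xv: "x \<in> verts G" using Iv unfolding I_def by blast
    have xI: "I = set (up G x)" using x geq[OF xv] unfolding I_def by simp
    have "x \<in> set (up G u)" "u \<in> set (up G x)" using x xI Ieq u unfolding I_def by auto
    then obtain t1 t2 where "key G u = key G x @ t1" "key G x = key G u @ t2"
      using anc_key xv uv by blast
    hence "key G x = key G u" by simp
    thus "x = u" using key_inj[OF valid xv uv] by blast
  qed
  thus ?thesis using u Ieq unfolding I_def by simp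
qed

lemma vle_key: assumes v1: "v1 \<in> verts G" and v2: "v2 \<in> verts G"
  shows "vle G v1 v2 \<longleftrightarrow> key G v1 \<le> key G v2"
proof -
  define u where "u = meet G v1 v2"
  have mp: "u \<in> set (up G v1) \<inter> set (up G v2)" "set (up G v1) \<inter> set (up G v2) = set (up G u)"
    using meet_props[OF v1 v2] unfolding u_def by auto
  have uv: "u \<in> verts G" using mp up_verts v1 by blast
  have "u \<in> set (up G v1)" "u \<in> set (up G v2)" using mp by auto
  then obtain r1 r2 where r: "key G v1 = key G u @ r1" "key G v2 = key G u @ r2"
    using anc_key[OF v1 uv] anc_key[OF v2 uv] by blast
  have vdef: "vle G v1 v2 \<longleftrightarrow> (u = v1 \<or> (u \<noteq> v1 \<and> gdir G u v1 < gdir G u v2))"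
    unfolding vle_def Let_def u_def by simp
  show ?thesis
  proof (cases "u = v1")
    case True
    have "key G v2 = key G v1 @ r2" using r(2) True by simp
    then show ?thesis using lex_prefix_le vdef True by simp
  next
    case F1: False
    have r1: "r1 \<noteq> []" using F1 r key_inj[OF valid uv v1] by auto
    show ?thesis
    proof (cases "u = v2")
      case True
      have "key G v1 = key G v2 @ r1" using r(1) True by simp
      hence "key G v2 < key G v1" using lex_prefix_less[OF r1] by simp
      moreover have "\<not> vle G v1 v2" using vdef F1 True by (simp add: gdir_def)
      ultimately show ?thesis by simp
    next
      case F2: False
      have r2: "r2 \<noteq> []" using F2 r key_inj[OF valid uv v2] by auto
      obtain x s1 y s2 where xy: "r1 = x # s1" "r2 = y # s2" using r1 r2 by (auto simp: neq_Nil_conv)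
      have u1: "u \<in> set (up G v1)" and u2: "u \<in> set (up G v2)" using mp by auto
      have g1: "gdir G u v1 = x" using gdir_anc[OF v1 u1 F1] r(1) xy(1) by simp
      have g2: "gdir G u v2 = y" using gdir_anc[OF v2 u2 F2] r(2) xy(2) by simp
      have "x \<noteq> y"
      proof
        assume "x = y"
        obtain a where a: "a \<in> set (up G v1)" "key G a = key G u @ [x]"
          using anc_exists[OF v1, of "key G u @ [x]" s1] r xy by auto
        have av: "a \<in> verts G" using a up_verts v1 by blast
        have "key G v2 = key G a @ s2" using a r xy \<open>x = y\<close> by simp
        hence "a \<in> set (up G v2)" using anc_key[OF v2 av] by blast
        hence "a \<in> set (up G u)" using a mp by blast
        then obtain t where "key G u = key G a @ t" using anc_key uv av by blast
        thus False using a by simp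
      qed
      hence "key G v1 \<le> key G v2 \<longleftrightarrow> x < y" using r xy lex_diff by simp
      then show ?thesis using vdef F1 g1 g2 by simp
    qed
  qed
qed

lemma vless_key: assumes "v1 \<in> verts G" "v2 \<in> verts G"
  shows "vless G v1 v2 \<longleftrightarrow> key G v1 < key G v2"
proof -
  have a: "vle G v1 v2 \<longleftrightarrow> key G v1 \<le> key G v2" by (rule vle_key[OF assms])
  have b: "v1 = v2 \<longleftrightarrow> key G v1 = key G v2" using key_inj[OF valid assms] by blast
  show ?thesis unfolding vless_def a b by (rule less_le[symmetric])
qed

lemma vint_key: assumes "a \<in> verts G" "b \<in> verts G"
  shows "vint G a b = {w \<in> verts G. key G a < key G w \<and> key G w < key G b}"
proof -
  have "\<And>w. w \<in> verts G \<Longrightarrow> (vless G a w \<and> vless G w b) = (key G a < key G w \<and> key G w < key G b)"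
    using vless_key assms by simp
  thus ?thesis unfolding vint_def by blast
qed

lemma vle_antisym: assumes "v1 \<in> verts G" "v2 \<in> verts G" "vle G v1 v2" "vle G v2 v1" shows "v1 = v2"
proof -
  have "key G v1 \<le> key G v2" "key G v2 \<le> key G v1" using vle_key assms by simp_all
  hence "key G v1 = key G v2" by (rule order_antisym)
  thus ?thesis using key_inj[OF valid assms(1,2)] by simp
qed

lemma vle_total: assumes "v1 \<in> verts G" "v2 \<in> verts G" shows "vle G v1 v2 \<or> vle G v2 v1"
proof -
  have "key G v1 \<le> key G v2 \<or> key G v2 \<le> key G v1" by (rule linear)
  thus ?thesis using vle_key assms by simp
qed

lemma vle_refl: "v1 \<in> verts G \<Longrightarrow> vle G v1 v1"
  using vle_key by simp

lemma vle_trans: assumes "v1 \<in> verts G" "v2 \<in> verts G" "v3 \<in> verts G" "vle G v1 v2" "vle G v2 v3"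
  shows "vle G v1 v3"
proof -
  have "key G v1 \<le> key G v2" "key G v2 \<le> key G v3" using vle_key assms by simp_all
  hence "key G v1 \<le> key G v3" by (rule order_trans)
  thus ?thesis using vle_key assms by simp
qed

lemma par_key_less: assumes "v \<in> verts G" "v \<noteq> base G" shows "key G (par G v) < key G v"
proof -
  have "key G (par G v) < key G (par G v) @ [cl G v]" by (rule lex_prefix_less) simp
  thus ?thesis using key_cons[OF valid assms] by simp
qed

lemma it_edge: assumes "endp G e = {a, b}" "a \<in> verts G" "b \<in> verts G" "a \<noteq> b" "vle G a b"
  shows "iota G e = b \<and> tau G e = a"
proof
  show "iota G e = b" unfolding iota_def
    using assms vle_refl vle_antisym by (intro the_equality) auto
  show "tau G e = a" unfolding tau_def
    using assms vle_refl vle_antisym by (intro the_equality) auto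
qed

lemma it_eT: assumes "v \<in> verts G" "v \<noteq> base G"
  shows "iota G (eT G v) = v \<and> tau G (eT G v) = par G v"
proof -
  have "vle G (par G v) v" using vle_key par_key_less assms par_verts[OF valid] by (simp add: less_imp_le)
  thus ?thesis using it_edge[of "eT G v" "par G v" v] eT_props[OF valid assms] par_verts[OF valid assms]
      par_ne[OF valid assms] assms by (auto simp: insert_commute)
qed

lemma it_mem: assumes "e \<in> edges G" shows "iota G e \<in> endp G e \<and> tau G e \<in> endp G e"
proof -
  have "endp G e \<subseteq> verts G" "card (endp G e) = 2" using endp_edge[OF valid assms] by auto
  then obtain a b where ab: "endp G e = {a, b}" "a \<noteq> b" "a \<in> verts G" "b \<in> verts G"
    by (auto simp: card_2_iff)
  show ?thesis
  proof (cases "vle G a b")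
    case True then show ?thesis using it_edge ab by auto
  next
    case False
    hence "vle G b a" using vle_total ab by blast
    then show ?thesis using it_edge[of e b a] ab by (auto simp: insert_commute)
  qed
qed

lemma F1: assumes m: "m \<in> verts G" "m \<noteq> base G" and z: "z \<in> vint G (par G m) m"
  shows "z \<noteq> base G \<and> (par G z = par G m \<or> par G z \<in> vint G (par G m) m)"
proof -
  have pm: "par G m \<in> verts G" using par_verts[OF valid m] .
  have zk: "z \<in> verts G" "key G (par G m) < key G z" "key G z < key G m"
    using z vint_key[OF pm m(1)] by auto
  have km: "key G m = key G (par G m) @ [cl G m]" using key_cons[OF valid m] .
  obtain j r where jr: "key G z = key G (par G m) @ j # r" "j < cl G m"
    using lex_between[of "key G (par G m)" "key G z" "cl G m"] zk km by auto
  have zb: "z \<noteq> base G" using jr key_base[OF valid] by auto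
  have kz: "key G z = key G (par G z) @ [cl G z]" using key_cons[OF valid zk(1) zb] .
  have pz: "par G z \<in> verts G" using par_verts[OF valid zk(1) zb] .
  show ?thesis
  proof (cases r rule: rev_exhaust)
    case Nil
    hence "key G (par G z) = key G (par G m)" using jr kz by simp
    then show ?thesis using key_inj[OF valid pz pm] zb by blast
  next
    case (snoc r' y)
    hence "key G (par G z) = key G (par G m) @ j # r'" using jr kz by simp
    hence "par G z \<in> vint G (par G m) m"
      using lex_between_conv[OF jr(2)] vint_key[OF pm m(1)] km pz by simp
    then show ?thesis using zb by blast
  qed
qed

lemma F2: assumes a: "a \<in> verts G" "a \<noteq> base G" and y: "y \<in> vint G (par G a) a"
  and b: "b \<in> verts G" "b \<noteq> base G" "par G b = y"
  shows "b \<in> vint G (par G a) a"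
proof -
  have pa: "par G a \<in> verts G" using par_verts[OF valid a] .
  have yk: "y \<in> verts G" "key G (par G a) < key G y" "key G y < key G a"
    using y vint_key[OF pa a(1)] by auto
  have ka: "key G a = key G (par G a) @ [cl G a]" using key_cons[OF valid a] .
  obtain j r where jr: "key G y = key G (par G a) @ j # r" "j < cl G a"
    using lex_between[of "key G (par G a)" "key G y" "cl G a"] yk ka by auto
  have "key G b = key G (par G a) @ j # (r @ [cl G b])" using key_cons[OF valid b(1,2)] b(3) jr by simp
  thus ?thesis using lex_between_conv[OF jr(2)] vint_key[OF pa a(1)] ka b by simp
qed

end


lemma rw_ctx: "rw_step G n x y \<Longrightarrow> rw_step G n (u @ x @ v) (u @ y @ v)"
  unfolding rw_step_def
proof -
  assume "\<exists>u v l r. (l, r) \<in> rels G n \<and> x = u @ l @ v \<and> y = u @ r @ v"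
  then obtain u' v' l r where "(l, r) \<in> rels G n" "x = u' @ l @ v'" "y = u' @ r @ v'" by blast
  thus "\<exists>u'' v'' l r. (l, r) \<in> rels G n \<and> u @ x @ v = u'' @ l @ v'' \<and> u @ y @ v = u'' @ r @ v''"
    by (intro exI[of _ "u @ u'"] exI[of _ "v' @ v"] exI[of _ l] exI[of _ r]) simp
qed

lemma rws_ctx: "(rw_step G n)\<^sup>*\<^sup>* x y \<Longrightarrow> (rw_step G n)\<^sup>*\<^sup>* (u @ x @ v) (u @ y @ v)"
proof (induction rule: rtranclp_induct)
  case base then show ?case by simp
next
  case (step y z) then show ?case using rw_ctx by (metis rtranclp.rtrancl_into_rtrancl)
qed

lemma rel_step: "(l, r) \<in> rels G n \<Longrightarrow> (rw_step G n)\<^sup>*\<^sup>* l r"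
proof (rule r_into_rtranclp)
  assume "(l, r) \<in> rels G n"
  thus "rw_step G n l r" unfolding rw_step_def
    by (intro exI[of _ "[]"] exI[of _ "[]"] exI[of _ l] exI[of _ r]) simp
qed

lemma rws_app: "(rw_step G n)\<^sup>*\<^sup>* A [] \<Longrightarrow> (rw_step G n)\<^sup>*\<^sup>* B [] \<Longrightarrow> (rw_step G n)\<^sup>*\<^sup>* (A @ B) []"
  using rws_ctx[of G n A "[]" "[]" B] by simp

lemma cellsD: "c \<in> cells G n \<Longrightarrow> finite c \<and> card c = n \<and> (\<forall>x\<in>c. in_graph G x) \<and>
   (\<forall>x\<in>c. \<forall>y\<in>c. x \<noteq> y \<longrightarrow> clos G x \<inter> clos G y = {})"
  by (simp add: cells_def)

context
  fixes G :: "('v,'e) gdata"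
  assumes valid: "valid G"
begin

lemma elred_cell: assumes c: "c \<in> cells G n" and u: "unblocked G c u"
  shows "elred G c u \<in> cells G n"
proof -
  have cd: "finite c" "card c = n" "\<forall>x\<in>c. in_graph G x"
     "\<forall>x\<in>c. \<forall>y\<in>c. x \<noteq> y \<longrightarrow> clos G x \<inter> clos G y = {}" using cellsD[OF c] by auto
  have uc: "Vtx u \<in> c" "u \<noteq> base G" "\<forall>x\<in>c. x \<noteq> Vtx u \<longrightarrow> endp G (eT G u) \<inter> clos G x = {}"
    using u by (auto simp: unblocked_def)
  have uv: "u \<in> verts G" using cd(3) uc(1) by fastforce
  have ee: "eT G u \<in> edges G" using eT_edges[OF valid uv uc(2)] .
  have ue: "u \<in> endp G (eT G u)" using eT_props[OF valid uv uc(2)] by simp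
  have nin: "Edg (eT G u) \<notin> c - {Vtx u}"
  proof
    assume "Edg (eT G u) \<in> c - {Vtx u}"
    hence "endp G (eT G u) \<inter> endp G (eT G u) = {}" using uc(3) by fastforce
    thus False using ue by blast
  qed
  have "card (c - {Vtx u}) = n - 1" using cd uc by simp
  moreover have "n \<ge> 1" using cd uc by (metis card_0_eq empty_iff less_one not_le)
  ultimately have "card (elred G c u) = n" using nin cd(1) by (simp add: elred_def)
  moreover have "finite (elred G c u)" using cd(1) by (simp add: elred_def)
  moreover have "\<forall>x\<in>elred G c u. in_graph G x" using cd(3) ee by (auto simp: elred_def)
  moreover have "\<forall>x\<in>elred G c u. \<forall>y\<in>elred G c u. x \<noteq> y \<longrightarrow> clos G x \<inter> clos G y = {}"
    using cd(4) uc(3) by (auto simp: elred_def)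
  ultimately show ?thesis by (simp add: cells_def)
qed

lemma face_cell: assumes c: "c \<in> cells G n" and e: "Edg e \<in> c" and y: "y \<in> endp G e"
  shows "insert (Vtx y) (c - {Edg e}) \<in> cells G n"
proof -
  have cd: "finite c" "card c = n" "\<forall>x\<in>c. in_graph G x"
     "\<forall>x\<in>c. \<forall>y\<in>c. x \<noteq> y \<longrightarrow> clos G x \<inter> clos G y = {}" using cellsD[OF c] by auto
  have ee: "e \<in> edges G" using cd(3) e by fastforce
  have yv: "y \<in> verts G" using endp_edge[OF valid ee] y by blast
  have dis: "\<forall>x\<in>c - {Edg e}. clos G x \<inter> endp G e = {}" using cd(4) e by fastforce
  have nin: "Vtx y \<notin> c - {Edg e}"
  proof
    assume "Vtx y \<in> c - {Edg e}"
    hence "clos G (Vtx y) \<inter> endp G e = {}" using dis by blast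
    thus False using y by simp
  qed
  have "card (c - {Edg e}) = n - 1" using cd e by simp
  moreover have "n \<ge> 1" using cd e by (metis card_0_eq empty_iff less_one not_le)
  ultimately have "card (insert (Vtx y) (c - {Edg e})) = n" using nin cd(1) by simp
  moreover have "\<forall>x\<in>insert (Vtx y) (c - {Edg e}). in_graph G x" using cd(3) yv by auto
  moreover have "\<forall>x\<in>insert (Vtx y) (c - {Edg e}). \<forall>z\<in>insert (Vtx y) (c - {Edg e}). x \<noteq> z \<longrightarrow> clos G x \<inter> clos G z = {}"
    using cd(4) dis y by auto
  ultimately show ?thesis using cd(1) by (simp add: cells_def)
qed

lemma min_exists: assumes "finite U" "U \<noteq> {}" "U \<subseteq> verts G" shows "\<exists>m\<in>U. \<forall>u\<in>U. vle G m u"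
proof -
  define K where "K = Min (key G ` U)"
  have "K \<in> key G ` U" unfolding K_def using assms by (intro Min_in) auto
  then obtain m where m: "m \<in> U" "key G m = K" by auto
  have "\<forall>u\<in>U. vle G m u"
  proof
    fix u assume u: "u \<in> U"
    have "K \<le> key G u" unfolding K_def using assms u by (intro Min_le) auto
    thus "vle G m u" using vle_key[OF valid] m u assms(3) by auto
  qed
  thus ?thesis using m by blast
qed

lemma minub_eq: assumes c: "c \<in> cells G n" and m: "unblocked G c m" and mm: "\<forall>u. unblocked G c u \<longrightarrow> vle G m u"
  shows "min_unblocked G c = m"
proof -
  have uv: "\<And>u. unblocked G c u \<Longrightarrow> u \<in> verts G"
    using cellsD[OF c] by (fastforce simp: unblocked_def)
  show ?thesis unfolding min_unblocked_def
  proof (rule the_equality)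
    show "unblocked G c m \<and> (\<forall>u. unblocked G c u \<longrightarrow> vle G m u)" using m mm by blast
  next
    fix v assume "unblocked G c v \<and> (\<forall>u. unblocked G c u \<longrightarrow> vle G v u)"
    thus "v = m" using m mm uv vle_antisym[OF valid] by blast
  qed
qed

end


definition VS :: "('v,'e) cell \<Rightarrow> 'v set" where "VS S = {z. Vtx z \<in> S}"

lemma VS_insert[simp]: "VS (insert (Vtx a) S) = insert a (VS S)" by (auto simp: VS_def)
lemma VS_diff[simp]: "VS (S - {Vtx a}) = VS S - {a}" by (auto simp: VS_def)
lemma VS_fin: "finite S \<Longrightarrow> finite (VS S)"
  unfolding VS_def by (rule finite_vimageI[of S Vtx, unfolded vimage_def]) (auto simp: inj_def)

context
  fixes G :: "('v,'e) gdata" and n :: nat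
  assumes valid: "valid G"
begin

lemma L_main:
  "\<forall>S w. (\<forall>y\<in>S. \<exists>z. y = Vtx z) \<longrightarrow> w \<in> verts G \<longrightarrow> w \<noteq> base G \<longrightarrow>
     insert (Edg (eT G w)) S \<in> cells G n \<longrightarrow> (\<forall>z. Vtx z \<in> S \<longrightarrow> z \<notin> vint G (par G w) w) \<longrightarrow>
     sum (depth G) (VS S) + depth G w = k \<longrightarrow>
     (\<forall>b. (rw_step G n)\<^sup>*\<^sup>* [(insert (Edg (eT G w)) S, b)] [])"
proof (induction k rule: less_induct)
  case (less k)
  show ?case
  proof (intro allI impI)
    fix S w b
    assume allV: "\<forall>y\<in>S. \<exists>z. y = Vtx z" and wv: "w \<in> verts G" and wb: "w \<noteq> base G"
      and fc: "insert (Edg (eT G w)) S \<in> cells G n"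
      and hyp: "\<forall>z. Vtx z \<in> S \<longrightarrow> z \<notin> vint G (par G w) w"
      and kdef: "sum (depth G) (VS S) + depth G w = k"
    define f where "f = insert (Edg (eT G w)) S"
    define x where "x = insert (Vtx w) S"
    have fcd: "finite f" "card f = n" "\<forall>y\<in>f. in_graph G y"
       "\<forall>y\<in>f. \<forall>y'\<in>f. y \<noteq> y' \<longrightarrow> clos G y \<inter> clos G y' = {}" using cellsD[OF fc] f_def by auto
    have eTw: "eT G w \<in> tree G" "endp G (eT G w) = {w, par G w}" using eT_props[OF valid wv wb] by auto
    have pw: "par G w \<in> verts G" using par_verts[OF valid wv wb] .
    have pwne: "par G w \<noteq> w" using par_ne[OF valid wv wb] .
    have finS: "finite S" using fcd f_def by simp
    have EnS: "Edg (eT G w) \<notin> S" using allV by auto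
    have Sv: "\<And>z. Vtx z \<in> S \<Longrightarrow> z \<in> verts G" using fcd f_def by fastforce
    have Sdis: "\<And>y. y \<in> S \<Longrightarrow> endp G (eT G w) \<inter> clos G y = {}"
    proof -
      fix y assume "y \<in> S"
      hence "y \<in> f" "y \<noteq> Edg (eT G w)" using EnS f_def by auto
      hence "clos G (Edg (eT G w)) \<inter> clos G y = {}" using fcd(4) f_def by auto
      thus "endp G (eT G w) \<inter> clos G y = {}" by simp
    qed
    have Sw: "\<And>z. Vtx z \<in> S \<Longrightarrow> z \<noteq> w \<and> z \<noteq> par G w"
      using Sdis eTw by fastforce
    have xc: "x \<in> cells G n"
    proof -
      have "insert (Vtx w) (f - {Edg (eT G w)}) \<in> cells G n"
        using face_cell[OF valid fc[folded f_def], of "eT G w" w] eTw f_def by simp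
      moreover have "f - {Edg (eT G w)} = S" using EnS f_def by auto
      ultimately show ?thesis using x_def by simp
    qed
    have xV: "\<forall>y\<in>x. \<exists>z. y = Vtx z" using allV x_def by auto
    have ubw: "unblocked G x w" unfolding unblocked_def x_def using wb Sdis by auto
    have "{e. Edg e \<in> x} = {}" using xV by auto
    hence dimx: "dim x = 0" by (simp add: dim_def)
    have xred: "x \<in> redset G n 0" using xc dimx ubw by (auto simp: has_pr_def)
    have xfin: "finite x" using xc cellsD by blast
    have Ufin: "finite {u. unblocked G x u}"
    proof (rule finite_subset)
      show "{u. unblocked G x u} \<subseteq> VS x" by (auto simp: unblocked_def VS_def)
      show "finite (VS x)" using VS_fin xfin by blast
    qed
    have Uv: "{u. unblocked G x u} \<subseteq> verts G"
      using cellsD[OF xc] by (fastforce simp: unblocked_def)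
    obtain m where m: "unblocked G x m" "\<forall>u. unblocked G x u \<longrightarrow> vle G m u"
      using min_exists[OF valid Ufin _ Uv] ubw by blast
    have mx: "Vtx m \<in> x" "m \<noteq> base G" "\<forall>y\<in>x. y \<noteq> Vtx m \<longrightarrow> endp G (eT G m) \<inter> clos G y = {}"
      using m(1) by (auto simp: unblocked_def)
    have mv: "m \<in> verts G" using Uv m by blast
    have eTm: "eT G m \<in> tree G" "endp G (eT G m) = {m, par G m}" using eT_props[OF valid mv mx(2)] by auto
    have pm: "par G m \<in> verts G" using par_verts[OF valid mv mx(2)] .
    have pmne: "par G m \<noteq> m" using par_ne[OF valid mv mx(2)] .
    have pmx: "Vtx (par G m) \<notin> x" using mx(3) eTm pmne by fastforce
    have prx: "pr G x = insert (Edg (eT G m)) (x - {Vtx m})"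
      unfolding pr_def elred_def using minub_eq[OF valid xc m] by simp
    have prTW: "pr G x \<in> cells G n \<Longrightarrow> pr G x \<in> TW G n"
    proof -
      assume pc: "pr G x \<in> cells G n"
      have "{e. Edg e \<in> pr G x} = {eT G m}" using prx xV by auto
      hence "dim (pr G x) = 1" by (simp add: dim_def)
      thus "pr G x \<in> TW G n" using pc xred by (auto simp: TW_def one_cells_def collapsible_def)
    qed
    have prc: "pr G x \<in> cells G n" unfolding pr_def using minub_eq[OF valid xc m] elred_cell[OF valid xc m(1)] by simp
    have N: "\<forall>z. Vtx z \<in> x \<longrightarrow> z \<notin> vint G (par G m) m"
    proof (rule ccontr)
      assume nt: "\<not> ?thesis"
      define Z where "Z = {z. Vtx z \<in> x \<and> z \<in> vint G (par G m) m}"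
      have Zne: "Z \<noteq> {}" using nt Z_def by auto
      have Zfin: "finite Z"
      proof (rule finite_subset)
        show "Z \<subseteq> VS x" by (auto simp: Z_def VS_def)
        show "finite (VS x)" using VS_fin xfin by blast
      qed
      define D where "D = Min (depth G ` Z)"
      have "D \<in> depth G ` Z" unfolding D_def using Zfin Zne by (intro Min_in) auto
      then obtain z where z: "z \<in> Z" "depth G z = D" by auto
      have zmin: "\<And>z'. z' \<in> Z \<Longrightarrow> depth G z \<le> depth G z'" unfolding z(2) D_def using Zfin by auto
      have zi: "z \<in> vint G (par G m) m" "Vtx z \<in> x" using z Z_def by auto
      have zv: "z \<in> verts G" using zi by (simp add: vint_def)
      have f1: "z \<noteq> base G \<and> (par G z = par G m \<or> par G z \<in> vint G (par G m) m)"
        using F1[OF valid mv mx(2) zi(1)] .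
      have pzx: "Vtx (par G z) \<notin> x"
      proof
        assume pzin: "Vtx (par G z) \<in> x"
        show False
        proof (cases "par G z = par G m")
          case True then show False using pzin pmx by simp
        next
          case False
          hence "par G z \<in> Z" using f1 pzin Z_def by auto
          hence "depth G z \<le> depth G (par G z)" by (rule zmin)
          thus False using depth_par[OF valid zv] f1 by fastforce
        qed
      qed
      have ubz: "unblocked G x z"
        unfolding unblocked_def
      proof (intro conjI ballI impI)
        show "Vtx z \<in> x" "z \<noteq> base G" using zi f1 by auto
      next
        fix y assume y: "y \<in> x" "y \<noteq> Vtx z"
        then obtain y' where y': "y = Vtx y'" using xV by blast
        have "endp G (eT G z) = {z, par G z}" using eT_props[OF valid zv] f1 by blast
        thus "endp G (eT G z) \<inter> clos G y = {}" using y y' pzx by auto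
      qed
      hence "vle G m z" using m(2) by blast
      hence "key G m \<le> key G z" using vle_key[OF valid mv zv] by simp
      moreover have "key G z < key G m" using zi(1) vint_key[OF valid pm mv] by simp
      ultimately show False by simp
    qed
    have fc': "f \<in> cells G n" using fc f_def by simp
    have dimf: "dim f = 1"
    proof -
      have "{e. Edg e \<in> f} = {eT G w}" using allV f_def by auto
      thus ?thesis by (simp add: dim_def)
    qed
    have TWrel: "\<And>g b'. g \<in> TW G n \<Longrightarrow> (rw_step G n)\<^sup>*\<^sup>* [(g, b')] []"
      by (rule rel_step) (auto simp: rels_def)
    have "(rw_step G n)\<^sup>*\<^sup>* [(f, b)] []"
    proof (cases "m = w")
      case True
      have "pr G x = f" using prx True x_def f_def Sw by auto
      hence "f \<in> TW G n" using prTW prc by simp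
      thus ?thesis by (rule TWrel)
    next
      case False
      have mS: "Vtx m \<in> S" using mx(1) False x_def by simp
      have pmw: "par G m \<noteq> w" using pmx x_def by auto
      have mpw: "m \<noteq> par G w" using Sw mS by blast
      have ppne: "par G m \<noteq> par G w"
      proof
        assume eq: "par G m = par G w"
        have "vle G m w" using m(2) ubw by blast
        hence "key G m \<le> key G w" using vle_key[OF valid mv wv] by simp
        moreover have "key G m \<noteq> key G w" using key_inj[OF valid mv wv] False by blast
        ultimately have "key G m < key G w" by simp
        moreover have "key G (par G w) < key G m" using par_key_less[OF valid mv mx(2)] eq by simp
        ultimately have "m \<in> vint G (par G w) w" using vint_key[OF valid pw wv] mv by simp
        thus False using hyp mS by blast
      qed
      have ubf: "unblocked G f m"
        unfolding unblocked_def
      proof (intro conjI ballI impI)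
        show "Vtx m \<in> f" "m \<noteq> base G" using mS mx(2) f_def by auto
      next
        fix y assume y: "y \<in> f" "y \<noteq> Vtx m"
        show "endp G (eT G m) \<inter> clos G y = {}"
        proof (cases "y = Edg (eT G w)")
          case True
          then show ?thesis using eTm eTw False mpw pmw ppne by auto
        next
          case False
          hence "y \<in> x" using y f_def x_def by auto
          thus ?thesis using mx(3) y by blast
        qed
      qed
      show ?thesis
      proof (cases "f \<in> pr G ` redset G n 0")
        case True
        hence "f \<in> TW G n" using fc' dimf by (auto simp: TW_def one_cells_def collapsible_def)
        thus ?thesis by (rule TWrel)
      next
        case notimg: False
        have fred: "redundant G n f" using fc' dimf notimg ubf
          by (auto simp: redundant_def has_pr_def)
        have f1c: "f \<in> one_cells G n" using fc' dimf by (simp add: one_cells_def)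
        have mub: "min_unblocked G f = m"
        proof (rule minub_eq[OF valid fc' ubf], intro allI impI)
          fix u assume u: "unblocked G f u"
          have "unblocked G x u"
            unfolding unblocked_def
          proof (intro conjI ballI impI)
            show "Vtx u \<in> x" "u \<noteq> base G" using u f_def x_def by (auto simp: unblocked_def)
          next
            fix y assume y: "y \<in> x" "y \<noteq> Vtx u"
            show "endp G (eT G u) \<inter> clos G y = {}"
            proof (cases "y = Vtx w")
              case True
              have "endp G (eT G u) \<inter> clos G (Edg (eT G w)) = {}"
                using u f_def by (auto simp: unblocked_def)
              then show ?thesis using True eTw by auto
            next
              case False
              hence "y \<in> f" using y f_def x_def by auto
              thus ?thesis using u y by (auto simp: unblocked_def)
            qed
          qed
          thus "vle G m u" using m(2) by blast
        qed
        have eof: "edge_of f = eT G w"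
          unfolding edge_of_def using allV f_def by (intro the_equality) auto
        have a'eq: "(THE x. x \<in> endp G (eT G m) \<and> x \<noteq> m) = par G m"
          using eTm pmne by (intro the_equality) auto
        have itw: "iota G (eT G w) = w" "tau G (eT G w) = par G w" using it_eT[OF valid wv wb] by auto
        have itm: "iota G (eT G m) = m" using it_eT[OF valid mv mx(2)] by auto
        define R where "R = S - {Vtx m}"
        have Req: "f - {Vtx m, Edg (eT G w)} = R" using EnS f_def R_def by auto
        define g1 where "g1 = R \<union> {Edg (eT G m), Vtx (par G w)}"
        define g2 where "g2 = R \<union> {Vtx (par G m), Edg (eT G w)}"
        define g3 where "g3 = R \<union> {Edg (eT G m), Vtx w}"
        have bw: "bword G f = [(g1, True), (g2, False), (g3, False)]"
          unfolding bword_def Let_def mub eof a'eq Req itw itm using pmne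
          by (simp add: g1_def g2_def g3_def)
        have eTne: "eT G m \<noteq> eT G w"
        proof
          assume "eT G m = eT G w"
          hence "w \<in> {m, par G m}" using eTm eTw by auto
          thus False using False pmw by auto
        qed
        define W2 where "W2 = elred G f m"
        have W2c: "W2 \<in> cells G n" unfolding W2_def by (rule elred_cell[OF valid fc' ubf])
        have W2eq: "W2 = insert (Edg (eT G m)) (insert (Edg (eT G w)) R)"
          unfolding W2_def elred_def f_def R_def by auto
        have g1c: "g1 \<in> cells G n"
        proof -
          have "insert (Vtx (par G w)) (W2 - {Edg (eT G w)}) \<in> cells G n"
            using face_cell[OF valid W2c, of "eT G w" "par G w"] W2eq eTw by auto
          moreover have "insert (Vtx (par G w)) (W2 - {Edg (eT G w)}) = g1"
            unfolding W2eq g1_def R_def using eTne EnS by auto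
          ultimately show ?thesis by simp
        qed
        have g2c: "g2 \<in> cells G n"
        proof -
          have "insert (Vtx (par G m)) (W2 - {Edg (eT G m)}) \<in> cells G n"
            using face_cell[OF valid W2c, of "eT G m" "par G m"] W2eq eTm by auto
          moreover have "insert (Vtx (par G m)) (W2 - {Edg (eT G m)}) = g2"
            unfolding W2eq g2_def R_def using eTne allV by auto
          ultimately show ?thesis by simp
        qed
        have g3eq: "g3 = pr G x" using prx False unfolding g3_def R_def x_def by auto
        have g3TW: "g3 \<in> TW G n" using g3eq prTW prc by simp
        have VSm: "sum (depth G) (VS S) = depth G m + sum (depth G) (VS S - {m})"
          using mS VS_fin[OF finS] by (simp add: VS_def sum.remove)
        have R1: "\<forall>b'. (rw_step G n)\<^sup>*\<^sup>* [(g1, b')] []"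
        proof -
          define S1 where "S1 = insert (Vtx (par G w)) R"
          have g1e: "g1 = insert (Edg (eT G m)) S1" unfolding g1_def S1_def by auto
          have a1: "\<forall>y\<in>S1. \<exists>z. y = Vtx z" using allV unfolding S1_def R_def by auto
          have c1: "\<forall>z. Vtx z \<in> S1 \<longrightarrow> z \<notin> vint G (par G m) m"
          proof (intro allI impI)
            fix z assume z: "Vtx z \<in> S1"
            show "z \<notin> vint G (par G m) m"
            proof (cases "z = par G w")
              case True
              show ?thesis
              proof
                assume "z \<in> vint G (par G m) m"
                hence "w \<in> vint G (par G m) m" using F2[OF valid mv mx(2) _ wv wb] True by blast
                thus False using N x_def by auto
              qed
            next
              case False
              hence "Vtx z \<in> x" using z unfolding S1_def R_def x_def by auto
              thus ?thesis using N by blast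
            qed
          qed
          have "VS S1 = insert (par G w) (VS S - {m})" unfolding S1_def R_def by simp
          moreover have "par G w \<notin> VS S - {m}" using Sw by (auto simp: VS_def)
          ultimately have "sum (depth G) (VS S1) = depth G (par G w) + sum (depth G) (VS S - {m})"
            using VS_fin[OF finS] by simp
          hence lt: "sum (depth G) (VS S1) + depth G m < k"
            using kdef VSm depth_par[OF valid wv wb] by simp
          show ?thesis using less.IH[OF lt] a1 mv mx(2) g1c[unfolded g1e] c1 g1e by blast
        qed
        have R2: "\<forall>b'. (rw_step G n)\<^sup>*\<^sup>* [(g2, b')] []"
        proof -
          define S2 where "S2 = insert (Vtx (par G m)) R"
          have g2e: "g2 = insert (Edg (eT G w)) S2" unfolding g2_def S2_def by auto
          have a2: "\<forall>y\<in>S2. \<exists>z. y = Vtx z" using allV unfolding S2_def R_def by auto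
          have c2: "\<forall>z. Vtx z \<in> S2 \<longrightarrow> z \<notin> vint G (par G w) w"
          proof (intro allI impI)
            fix z assume z: "Vtx z \<in> S2"
            show "z \<notin> vint G (par G w) w"
            proof (cases "z = par G m")
              case True
              show ?thesis
              proof
                assume "z \<in> vint G (par G w) w"
                hence "m \<in> vint G (par G w) w" using F2[OF valid wv wb _ mv mx(2)] True by blast
                thus False using hyp mS by blast
              qed
            next
              case False
              hence "Vtx z \<in> S" using z unfolding S2_def R_def by auto
              thus ?thesis using hyp by blast
            qed
          qed
          have "VS S2 = insert (par G m) (VS S - {m})" unfolding S2_def R_def by simp
          moreover have "par G m \<notin> VS S - {m}" using pmx x_def by (auto simp: VS_def)
          ultimately have "sum (depth G) (VS S2) = depth G (par G m) + sum (depth G) (VS S - {m})"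
            using VS_fin[OF finS] by simp
          hence lt: "sum (depth G) (VS S2) + depth G w < k"
            using kdef VSm depth_par[OF valid mv mx(2)] by simp
          show ?thesis using less.IH[OF lt] a2 wv wb g2c[unfolded g2e] c2 g2e by blast
        qed
        have R3: "\<forall>b'. (rw_step G n)\<^sup>*\<^sup>* [(g3, b')] []" using TWrel g3TW by blast
        show ?thesis
        proof (cases b)
          case True
          have "([(f, True)], wrev (bword G f)) \<in> rels G n" using f1c fred by (auto simp: rels_def)
          moreover have "wrev (bword G f) = [(g3, True)] @ [(g2, True)] @ [(g1, False)]"
            by (simp add: bw wrev_def orev_def)
          ultimately have "(rw_step G n)\<^sup>*\<^sup>* [(f, True)] ([(g3, True)] @ [(g2, True)] @ [(g1, False)])"
            using rel_step by metis
          moreover have "(rw_step G n)\<^sup>*\<^sup>* ([(g3, True)] @ [(g2, True)] @ [(g1, False)]) []"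
            using R1 R2 R3 rws_app by blast
          ultimately have "(rw_step G n)\<^sup>*\<^sup>* [(f, True)] []" by (rule rtranclp_trans)
          thus ?thesis using True by simp
        next
          case False
          have "([(f, False)], bword G f) \<in> rels G n" using f1c fred by (auto simp: rels_def)
          moreover have "bword G f = [(g1, True)] @ [(g2, False)] @ [(g3, False)]" by (simp add: bw)
          ultimately have "(rw_step G n)\<^sup>*\<^sup>* [(f, False)] ([(g1, True)] @ [(g2, False)] @ [(g3, False)])"
            using rel_step by metis
          moreover have "(rw_step G n)\<^sup>*\<^sup>* ([(g1, True)] @ [(g2, False)] @ [(g3, False)]) []"
            using R1 R2 R3 rws_app by blast
          ultimately have "(rw_step G n)\<^sup>*\<^sup>* [(f, False)] []" by (rule rtranclp_trans)
          thus ?thesis using False by simp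
        qed
      qed
    qed
    thus "(rw_step G n)\<^sup>*\<^sup>* [(insert (Edg (eT G w)) S, b)] []" using f_def by simp
  qed
qed

lemma L:
  assumes "\<forall>y\<in>S. \<exists>z. y = Vtx z" "w \<in> verts G" "w \<noteq> base G"
    "insert (Edg (eT G w)) S \<in> cells G n" "\<forall>z. Vtx z \<in> S \<longrightarrow> z \<notin> vint G (par G w) w"
  shows "(rw_step G n)\<^sup>*\<^sup>* [(insert (Edg (eT G w)) S, b)] []"
  by (rule L_main[rule_format, OF _ assms(2-4) _ refl]) (use assms(1,5) in blast)+

end


theorem mainTheorem15:
  fixes G :: "('v,'e) gdata" and n :: nat and c c' :: "('v,'e) cell" and v :: 'v and e :: 'e
  assumes "valid G"
    and "n \<ge> 1"
    and "c \<in> cells G n" and "dim c = 1" and "redundant G n c"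
    and "unblocked G c v" and "\<forall>u. unblocked G c u \<longrightarrow> vle G v u"
    and "Edg e \<in> c"
    and "c' = insert (Vtx (tau G (eT G v))) (c - {Vtx v})"
    and "vint G (tau G (eT G v)) v \<inter> ({u. Vtx u \<in> c \<and> u \<noteq> v} \<union> {iota G e, tau G e}) = {}"
  shows "(rw_step G n)\<^sup>*\<^sup>* [(c, True)] [(c', True)]"
proof -
  note valid = assms(1)
  have cc: "c \<in> cells G n" and dimc: "dim c = 1" and red: "redundant G n c"
    and ubv: "unblocked G c v" and vmin: "\<forall>u. unblocked G c u \<longrightarrow> vle G v u"
    and ec: "Edg e \<in> c" and c'def: "c' = insert (Vtx (tau G (eT G v))) (c - {Vtx v})"
    and hyp: "vint G (tau G (eT G v)) v \<inter> ({u. Vtx u \<in> c \<and> u \<noteq> v} \<union> {iota G e, tau G e}) = {}"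
    using assms(3) assms(4) assms(5) assms(6) assms(7) assms(8) assms(9) assms(10) by -
  have cd: "finite c" "card c = n" "\<forall>y\<in>c. in_graph G y"
     "\<forall>y\<in>c. \<forall>y'\<in>c. y \<noteq> y' \<longrightarrow> clos G y \<inter> clos G y' = {}" using cellsD[OF cc] by auto
  have vx: "Vtx v \<in> c" "v \<noteq> base G" "\<forall>y\<in>c. y \<noteq> Vtx v \<longrightarrow> endp G (eT G v) \<inter> clos G y = {}"
    using ubv by (auto simp: unblocked_def)
  have vv: "v \<in> verts G" using cd(3) vx(1) by fastforce
  have eTv: "eT G v \<in> tree G" "endp G (eT G v) = {v, par G v}" using eT_props[OF valid vv vx(2)] by auto
  have pvne: "par G v \<noteq> v" using par_ne[OF valid vv vx(2)] .
  have itv: "iota G (eT G v) = v" "tau G (eT G v) = par G v" using it_eT[OF valid vv vx(2)] by auto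
  have mub: "min_unblocked G c = v" using minub_eq[OF valid cc ubv vmin] .
  have E1: "{e'. Edg e' \<in> c} = {e}"
  proof -
    have "card {e'. Edg e' \<in> c} = 1" using dimc by (simp add: dim_def)
    then obtain a where "{e'. Edg e' \<in> c} = {a}" by (auto simp: card_1_singleton_iff)
    thus ?thesis using ec by auto
  qed
  have onlye: "\<And>e'. Edg e' \<in> c \<Longrightarrow> e' = e"
  proof -
    fix e' assume "Edg e' \<in> c"
    hence "e' \<in> {e'. Edg e' \<in> c}" by simp
    thus "e' = e" unfolding E1 by simp
  qed
  have eof: "edge_of c = e" unfolding edge_of_def
  proof (rule the_equality)
    show "Edg e \<in> c" by (rule ec)
  next
    fix e' assume "Edg e' \<in> c" thus "e' = e" by (rule onlye)
  qed
  have "in_graph G (Edg e)" using cd(3) ec by blast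
  hence ee: "e \<in> edges G" by simp
  have itm: "iota G e \<in> endp G e" "tau G e \<in> endp G e" using it_mem[OF valid ee] by auto
  have a'eq: "(THE x. x \<in> endp G (eT G v) \<and> x \<noteq> v) = par G v"
    using eTv pvne by (intro the_equality) auto
  define R where "R = c - {Vtx v, Edg e}"
  have RV: "\<forall>y\<in>R. \<exists>z. y = Vtx z"
  proof
    fix y assume "y \<in> R"
    thus "\<exists>z. y = Vtx z" using onlye unfolding R_def by (cases y) auto
  qed
  define h1 where "h1 = R \<union> {Edg (eT G v), Vtx (tau G e)}"
  define h3 where "h3 = R \<union> {Edg (eT G v), Vtx (iota G e)}"
  have bw: "bword G c = [(h1, True), (R \<union> {Vtx (par G v), Edg e}, False), (h3, False)]"
    unfolding bword_def Let_def mub eof a'eq itv using pvne R_def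
    by (simp add: h1_def h3_def R_def)
  have c'eq: "R \<union> {Vtx (par G v), Edg e} = c'"
    unfolding c'def itv R_def using ec vx(1) by auto
  have c1: "c \<in> one_cells G n" using cc dimc by (simp add: one_cells_def)
  have "([(c, True)], wrev (bword G c)) \<in> rels G n" using c1 red by (auto simp: rels_def)
  moreover have "wrev (bword G c) = [(h3, True)] @ ([(c', True)] @ [(h1, False)])"
    using c'eq by (simp add: bw wrev_def orev_def)
  ultimately have s1: "(rw_step G n)\<^sup>*\<^sup>* [(c, True)] ([(h3, True)] @ ([(c', True)] @ [(h1, False)]))"
    using rel_step by metis
  have nin: "Edg (eT G v) \<notin> c"
  proof
    assume "Edg (eT G v) \<in> c"
    hence "endp G (eT G v) \<inter> endp G (eT G v) = {}" using vx(3) by fastforce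
    thus False using eTv by blast
  qed
  define W2 where "W2 = elred G c v"
  have W2c: "W2 \<in> cells G n" unfolding W2_def by (rule elred_cell[OF valid cc ubv])
  have W2eq: "W2 = insert (Edg (eT G v)) (insert (Edg e) R)"
    unfolding W2_def elred_def R_def using ec by auto
  have eneT: "e \<noteq> eT G v" using nin ec by auto
  have Rsub: "\<And>z. Vtx z \<in> R \<Longrightarrow> Vtx z \<in> c \<and> z \<noteq> v" unfolding R_def by auto
  have cond: "\<And>z. z = iota G e \<or> z = tau G e \<or> Vtx z \<in> R \<Longrightarrow> z \<notin> vint G (par G v) v"
  proof -
    fix z assume z: "z = iota G e \<or> z = tau G e \<or> Vtx z \<in> R"
    have "z \<in> {u. Vtx u \<in> c \<and> u \<noteq> v} \<union> {iota G e, tau G e}" using z Rsub by auto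
    thus "z \<notin> vint G (par G v) v" using hyp itv(2) by (auto simp del: Un_iff)
  qed
  have dh: "\<And>y. y \<in> {iota G e, tau G e} \<Longrightarrow> (rw_step G n)\<^sup>*\<^sup>* [(R \<union> {Edg (eT G v), Vtx y}, b)] []" for b
  proof -
    fix y assume y: "y \<in> {iota G e, tau G e}"
    have yin: "y \<in> endp G e" using y itm by auto
    have "insert (Vtx y) (W2 - {Edg e}) \<in> cells G n"
      using face_cell[OF valid W2c, of e y] W2eq yin by auto
    moreover have "insert (Vtx y) (W2 - {Edg e}) = insert (Edg (eT G v)) (insert (Vtx y) R)"
      unfolding W2eq using eneT RV by auto
    ultimately have hc: "insert (Edg (eT G v)) (insert (Vtx y) R) \<in> cells G n" by simp
    have a: "\<forall>y'\<in>insert (Vtx y) R. \<exists>z. y' = Vtx z" using RV by auto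
    have cnd: "\<forall>z. Vtx z \<in> insert (Vtx y) R \<longrightarrow> z \<notin> vint G (par G v) v"
      using cond y by auto
    have eqs: "R \<union> {Edg (eT G v), Vtx y} = insert (Edg (eT G v)) (insert (Vtx y) R)" by auto
    show "(rw_step G n)\<^sup>*\<^sup>* [(R \<union> {Edg (eT G v), Vtx y}, b)] []"
      unfolding eqs by (rule L[OF valid a vv vx(2) hc cnd])
  qed
  have d3: "(rw_step G n)\<^sup>*\<^sup>* [(h3, True)] []" unfolding h3_def by (rule dh) simp
  have d1: "(rw_step G n)\<^sup>*\<^sup>* [(h1, False)] []" unfolding h1_def by (rule dh) simp
  have s2: "(rw_step G n)\<^sup>*\<^sup>* ([(h3, True)] @ ([(c', True)] @ [(h1, False)])) ([] @ ([(c', True)] @ [(h1, False)]))"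
    using rws_ctx[OF d3, of "[]" "[(c', True)] @ [(h1, False)]"] by simp
  have s3: "(rw_step G n)\<^sup>*\<^sup>* ([(c', True)] @ [(h1, False)] @ []) ([(c', True)] @ [] @ [])"
    using rws_ctx[OF d1, of "[(c', True)]" "[]"] by simp
  have "(rw_step G n)\<^sup>*\<^sup>* [(c, True)] ([(c', True)] @ [(h1, False)])"
    using rtranclp_trans[OF s1 s2] by simp
  moreover have "(rw_step G n)\<^sup>*\<^sup>* ([(c', True)] @ [(h1, False)]) [(c', True)]" using s3 by simp
  ultimately show ?thesis by (rule rtranclp_trans)
qed


end
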